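(* There is an absolute constant $C>0$ with the following property. Let $m\ge1$, $0\le k\le m$, and $\pi\in\mathcal P_{\le2}(m)$, and let $N^1_{k,\pi}(m)$ be the number of involutions $\sigma\in\mathrm{Sym}_m$ that preserve $\pi$ and have exactly $k$ fixed points. Then \[ N^1_{k,\pi}(m)\le C^m(m!)^{\frac12-\frac{\pi_2}{2m}-\frac k{4m}} . \]
   Context: $\mathcal P_{\le2}(m)$ is the set of set partitions of $\{1,\dots,m\}$ with all blocks of size at most $2$, and $\pi_2$ is the number of blocks of size $2$ of $\pi$. A permutation preserves $\pi$ if it maps each block of $\pi$ onto a block of $\pi$. Involutions are elements $\sigma$ with $\sigma^2=1$ (the identity included). *)

theory Defs
  imports Complex_Main "HOL-Library.Disjoint_Sets" "HOL-Combinatorics.Permutations"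
begin

definition partitions_le2 :: "nat \<Rightarrow> nat set set set" where
  "partitions_le2 m = {P. partition_on {1..m} P \<and> (\<forall>B\<in>P. card B \<le> 2)}"

definition pi2 :: "nat set set \<Rightarrow> nat" where
  "pi2 P = card {B\<in>P. card B = 2}"

definition preserves :: "(nat \<Rightarrow> nat) \<Rightarrow> nat set set \<Rightarrow> bool" where
  "preserves \<sigma> P \<longleftrightarrow> (\<forall>B\<in>P. \<sigma> ` B \<in> P)"

definition N1 :: "nat \<Rightarrow> nat set set \<Rightarrow> nat \<Rightarrow> nat" where
  "N1 k P m = card {\<sigma>. \<sigma> permutes {1..m} \<and> \<sigma> \<circ> \<sigma> = id \<and> preserves \<sigma> P
                     \<and> card {i\<in>{1..m}. \<sigma> i = i} = k}"

end

theory Submission imports Defs "HOL-Library.FuncSet" begin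

definition blk :: "nat set set \<Rightarrow> nat \<Rightarrow> nat set" where
  "blk P x = (THE B. B \<in> P \<and> x \<in> B)"

lemma blk_eq:
  assumes P: "partition_on A P" and "B \<in> P" "x \<in> B"
  shows "blk P x = B"
proof -
  have "\<And>C. C \<in> P \<and> x \<in> C \<Longrightarrow> C = B"
    using P assms(2,3) unfolding partition_on_def disjoint_def by blast
  then show ?thesis unfolding blk_def using assms(2,3) by (metis (no_types, lifting) the_equality)
qed

lemma blk_mem:
  assumes P: "partition_on A P" and "x \<in> A"
  shows "blk P x \<in> P" "x \<in> blk P x"
proof -
  obtain B where "B \<in> P" "x \<in> B" using P assms(2) unfolding partition_on_def by blast
  then show "blk P x \<in> P" "x \<in> blk P x" using blk_eq[OF P] by auto
qed

lemma blk_image: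
  assumes P: "partition_on A P" and s: "\<sigma> permutes A" "preserves \<sigma> P" and x: "x \<in> A"
  shows "blk P (\<sigma> x) = \<sigma> ` blk P x"
proof -
  have "\<sigma> ` blk P x \<in> P" using s(2) blk_mem[OF P x] unfolding preserves_def by blast
  moreover have "\<sigma> x \<in> \<sigma> ` blk P x" using blk_mem[OF P x] by blast
  ultimately show ?thesis using blk_eq[OF P] by blast
qed

lemma two_uniq:
  assumes "finite B" "card B \<le> 2" "a \<in> B" "b \<in> B" "c \<in> B" "b \<noteq> a" "c \<noteq> a"
  shows "b = c"
proof (rule ccontr)
  assume "b \<noteq> c"
  then have "card {a,b,c} = 3" using assms by auto
  moreover have "card {a,b,c} \<le> card B" using assms by (intro card_mono) auto
  ultimately show False using assms by linarith
qed

definition Ws :: "nat set set \<Rightarrow> (nat \<Rightarrow> nat) \<Rightarrow> nat set \<Rightarrow> nat set" where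
  "Ws P \<sigma> A = {x\<in>A. \<sigma> x \<notin> blk P x \<and> (\<forall>y \<in> blk P x \<union> blk P (\<sigma> x). y \<noteq> x \<longrightarrow> x < y)}"

lemma inj_core:
  assumes P: "partition_on A P" and fin: "finite A" and c2: "\<forall>B\<in>P. card B \<le> 2"
  and s: "\<sigma> permutes A" "\<forall>x. \<sigma> (\<sigma> x) = x" "preserves \<sigma> P"
  and t: "\<tau> permutes A" "\<forall>x. \<tau> (\<tau> x) = x" "preserves \<tau> P"
  and F: "{x\<in>A. \<sigma> x = x} = {x\<in>A. \<tau> x = x}"
  and Sw: "{x\<in>A. \<sigma> x \<noteq> x \<and> \<sigma> x \<in> blk P x} = {x\<in>A. \<tau> x \<noteq> x \<and> \<tau> x \<in> blk P x}"
  and W: "Ws P \<sigma> A = Ws P \<tau> A" and R: "\<forall>x \<in> Ws P \<sigma> A. \<sigma> x = \<tau> x"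
  shows "\<sigma> y = \<tau> y"
proof (cases "y \<in> A")
  case False
  then show ?thesis using s(1) t(1) by (simp add: permutes_not_in)
next
  case yA: True
  define B where "B = blk P y"
  have BP: "B \<in> P" and yB: "y \<in> B" using blk_mem[OF P yA] B_def by auto
  have finP: "\<And>C. C \<in> P \<Longrightarrow> finite C" using P fin unfolding partition_on_def
    by (meson Union_upper finite_subset)
  have subA: "\<And>C. C \<in> P \<Longrightarrow> C \<subseteq> A" using P unfolding partition_on_def by blast
  have same: "\<And>C D z. C \<in> P \<Longrightarrow> D \<in> P \<Longrightarrow> z \<in> C \<Longrightarrow> z \<in> D \<Longrightarrow> C = D"
    using blk_eq[OF P] by metis
  have sA: "\<sigma> y \<in> A" using s(1) yA by (simp add: permutes_in_image)
  show ?thesis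
  proof (cases "\<sigma> y = y")
    case True
    then have "y \<in> {x\<in>A. \<tau> x = x}" using F yA by blast
    then show ?thesis using True by simp
  next
    case ny: False
    show ?thesis
    proof (cases "\<sigma> y \<in> B")
      case True
      then have "y \<in> {x\<in>A. \<tau> x \<noteq> x \<and> \<tau> x \<in> blk P x}" using Sw yA ny B_def by blast
      then have "\<tau> y \<noteq> y" "\<tau> y \<in> B" using B_def by auto
      then show ?thesis using two_uniq[OF finP[OF BP] c2[rule_format, OF BP] yB True] ny by metis
    next
      case nB: False
      define B' where "B' = blk P (\<sigma> y)"
      have B'P: "B' \<in> P" and syB': "\<sigma> y \<in> B'" using blk_mem[OF P sA] B'_def by auto
      have B'img: "B' = \<sigma> ` B" using blk_image[OF P s(1) s(3) yA] B'_def B_def by simp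
      have BB': "B \<inter> B' = {}" using same BP B'P nB syB' by blast
      define u where "u = Min (B \<union> B')"
      have finU: "finite (B \<union> B')" using finP BP B'P by blast
      have uin: "u \<in> B \<union> B'" unfolding u_def using finU yB by (intro Min_in) auto
      have umin: "\<And>z. z \<in> B \<union> B' \<Longrightarrow> u \<le> z" unfolding u_def using finU by simp
      show ?thesis
      proof (cases "u \<in> B")
        case uB: True
        have uA: "u \<in> A" using subA BP uB by blast
        have bu: "blk P u = B" using blk_eq[OF P BP uB] .
        have bsu: "blk P (\<sigma> u) = B'" using blk_image[OF P s(1) s(3) uA] bu B'img by simp
        have suB': "\<sigma> u \<in> B'" using B'img uB by blast
        have "\<forall>z \<in> blk P u \<union> blk P (\<sigma> u). z \<noteq> u \<longrightarrow> u < z"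
          unfolding bu bsu using umin by (metis le_neq_implies_less)
        moreover have "\<sigma> u \<notin> blk P u" using bu suB' BB' by blast
        ultimately have "u \<in> Ws P \<sigma> A" unfolding Ws_def using uA by blast
        then have tu: "\<tau> u = \<sigma> u" using R by metis
        show ?thesis
        proof (cases "y = u")
          case True then show ?thesis using tu by simp
        next
          case yu: False
          have ne: "\<sigma> y \<noteq> \<sigma> u" using yu s(2) by metis
          have "blk P (\<tau> y) = \<tau> ` B" using blk_image[OF P t(1) t(3) yA] B_def by simp
          also have "\<dots> = blk P (\<tau> u)" using blk_image[OF P t(1) t(3) uA] bu by simp
          finally have "\<tau> y \<in> B'" using tu bsu blk_mem(2)[OF P, of "\<tau> y"] t(1) yA
            by (simp add: permutes_in_image)
          moreover have "\<tau> y \<noteq> \<tau> u" using yu t(2) by metis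
          ultimately show ?thesis
            using two_uniq[OF finP[OF B'P] c2[rule_format, OF B'P] suB' syB'] ne tu by metis
        qed
      next
        case unB: False
        then have uB': "u \<in> B'" using uin by blast
        have uA: "u \<in> A" using subA B'P uB' by blast
        have bu: "blk P u = B'" using blk_eq[OF P B'P uB'] .
        have "\<sigma> ` B' = blk P (\<sigma> (\<sigma> y))" using blk_image[OF P s(1) s(3) sA] B'_def by simp
        then have sB': "\<sigma> ` B' = B" using s(2) B_def by simp
        have bsu: "blk P (\<sigma> u) = B" using blk_image[OF P s(1) s(3) uA] bu sB' by simp
        have suB: "\<sigma> u \<in> B" using sB' uB' by blast
        have "\<forall>z \<in> blk P u \<union> blk P (\<sigma> u). z \<noteq> u \<longrightarrow> u < z"
          unfolding bu bsu using umin by (metis le_neq_implies_less Un_commute)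
        moreover have "\<sigma> u \<notin> blk P u" using bu suB BB' by blast
        ultimately have "u \<in> Ws P \<sigma> A" unfolding Ws_def using uA by blast
        then have tu: "\<tau> u = \<sigma> u" using R by metis
        have tuA: "\<tau> u \<in> A" using t(1) uA by (simp add: permutes_in_image)
        have "blk P (\<tau> (\<tau> u)) = \<tau> ` blk P (\<tau> u)" using blk_image[OF P t(1) t(3) tuA] .
        moreover have "blk P (\<tau> (\<tau> u)) = B'" using t(2) bu by simp
        moreover have "blk P (\<tau> u) = B" using tu bsu by simp
        ultimately have "\<tau> ` B = B'" by simp
        then have tyB': "\<tau> y \<in> B'" using yB by blast
        show ?thesis
        proof (cases "\<sigma> y = u")
          case True
          then have "\<sigma> u = y" using s(2) by metis
          then show ?thesis using tu t(2) True by metis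
        next
          case False
          have "\<tau> y \<noteq> u" using False s(2) t(2) tu by metis
          then show ?thesis
            using two_uniq[OF finP[OF B'P] c2[rule_format, OF B'P] uB' syB' tyB'] False by metis
        qed
      qed
    qed
  qed
qed

lemma count_core:
  assumes P: "partition_on A P" and fin: "finite A" and c2: "\<forall>B\<in>P. card B \<le> 2"
  and s: "\<sigma> permutes A" "\<forall>x. \<sigma> (\<sigma> x) = x" "preserves \<sigma> P"
  shows "4 * card (Ws P \<sigma> A) + 2 * card {B\<in>P. card B = 2} + card {x\<in>A. \<sigma> x = x} \<le> 2 * card A"
proof -
  define W where "W = Ws P \<sigma> A"
  have finP: "\<And>C. C \<in> P \<Longrightarrow> finite C" using P fin unfolding partition_on_def
    by (meson Union_upper finite_subset)
  have subA: "\<And>C. C \<in> P \<Longrightarrow> C \<subseteq> A" using P unfolding partition_on_def by blast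
  have ne: "\<And>C. C \<in> P \<Longrightarrow> C \<noteq> {}" using P unfolding partition_on_def by blast
  have fP: "finite P" using finite_elements[OF fin P] .
  have same: "\<And>C D z. C \<in> P \<Longrightarrow> D \<in> P \<Longrightarrow> z \<in> C \<Longrightarrow> z \<in> D \<Longrightarrow> C = D"
    using blk_eq[OF P] by metis
  have WA: "W \<subseteq> A" unfolding W_def Ws_def by blast
  have Wd: "\<And>w. w \<in> W \<Longrightarrow> w \<in> A \<and> \<sigma> w \<notin> blk P w \<and>
      (\<forall>y \<in> blk P w \<union> blk P (\<sigma> w). y \<noteq> w \<longrightarrow> w < y)"
    unfolding W_def Ws_def by blast
  have sA: "\<And>x. x \<in> A \<Longrightarrow> \<sigma> x \<in> A" using s(1) by (simp add: permutes_in_image)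
  have bi: "\<And>x. x \<in> A \<Longrightarrow> blk P (\<sigma> x) = \<sigma> ` blk P x" using blk_image[OF P s(1) s(3)] .
  have bm: "\<And>x. x \<in> A \<Longrightarrow> blk P x \<in> P \<and> x \<in> blk P x" using blk_mem[OF P] by blast
  have bss: "\<And>x. x \<in> A \<Longrightarrow> blk P x = \<sigma> ` blk P (\<sigma> x)"
    using bi sA s(2) by metis
  have injs: "inj \<sigma>" using s(1) by (simp add: permutes_inj)
  have i1: "inj_on (blk P) W"
  proof (rule inj_onI)
    fix w w' assume w: "w \<in> W" "w' \<in> W" "blk P w = blk P w'"
    show "w = w'"
    proof (rule ccontr)
      assume "w \<noteq> w'"
      then have "w < w'" using Wd[OF w(1)] bm[of w'] Wd[OF w(2)] w(3) by auto
      moreover have "w' < w" using Wd[OF w(2)] bm[of w] Wd[OF w(1)] w(3) \<open>w \<noteq> w'\<close> by auto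
      ultimately show False by simp
    qed
  qed
  have i2: "inj_on (blk P \<circ> \<sigma>) W"
  proof (rule inj_onI)
    fix w w' assume w: "w \<in> W" "w' \<in> W" "(blk P \<circ> \<sigma>) w = (blk P \<circ> \<sigma>) w'"
    then have "\<sigma> ` blk P w = \<sigma> ` blk P w'" using bi Wd by auto
    then have "blk P w = blk P w'" using injs by (simp add: inj_image_eq_iff)
    then show "w = w'" using i1 w by (meson inj_onD)
  qed
  have dj: "blk P ` W \<inter> (blk P \<circ> \<sigma>) ` W = {}"
  proof (rule ccontr)
    assume "blk P ` W \<inter> (blk P \<circ> \<sigma>) ` W \<noteq> {}"
    then obtain w w' where w: "w \<in> W" "w' \<in> W" and e: "blk P w = blk P (\<sigma> w')" by auto
    have wA: "w \<in> A" "w' \<in> A" using w WA by auto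
    have "w \<noteq> w'" using e Wd[OF w(1)] bm[OF sA[OF wA(1)]] by auto
    have "w \<in> blk P (\<sigma> w')" using e bm[OF wA(1)] by simp
    then have lt1: "w' < w" using Wd[OF w(2)] \<open>w \<noteq> w'\<close> by auto
    have "blk P w' = \<sigma> ` blk P (\<sigma> w')" using bss[OF wA(2)] .
    also have "\<dots> = \<sigma> ` blk P w" using e by simp
    also have "\<dots> = blk P (\<sigma> w)" using bi[OF wA(1)] by simp
    finally have "w' \<in> blk P (\<sigma> w)" using bm[OF wA(2)] by simp
    then have "w < w'" using Wd[OF w(1)] \<open>w \<noteq> w'\<close> by auto
    then show False using lt1 by simp
  qed
  define Q where "Q = blk P ` W \<union> (blk P \<circ> \<sigma>) ` W"
  have finW: "finite W" using WA fin finite_subset by blast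
  have cQ: "card Q = 2 * card W"
    unfolding Q_def using card_Un_disjoint[OF _ _ dj] finW card_image[OF i1] card_image[OF i2] by simp
  have QP: "Q \<subseteq> P" unfolding Q_def using bm WA sA by auto
  have Qnf: "\<And>B x. B \<in> Q \<Longrightarrow> x \<in> B \<Longrightarrow> \<sigma> x \<noteq> x"
  proof -
    fix B x assume B: "B \<in> Q" and x: "x \<in> B"
    show "\<sigma> x \<noteq> x"
    proof
      assume fx: "\<sigma> x = x"
      obtain w where w: "w \<in> W" and "B = blk P w \<or> B = blk P (\<sigma> w)" using B unfolding Q_def by auto
      have wA: "w \<in> A" using w WA by auto
      have d: "blk P w \<noteq> blk P (\<sigma> w)" using Wd[OF w] bm[OF sA[OF wA]] by auto
      have "x \<in> blk P w \<and> x \<in> blk P (\<sigma> w)"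
      proof (cases "B = blk P w")
        case True
        then have "\<sigma> x \<in> \<sigma> ` blk P w" using x by blast
        then show ?thesis using fx bi[OF wA] x True by simp
      next
        case False
        then have xb: "x \<in> blk P (\<sigma> w)" using x \<open>B = blk P w \<or> B = blk P (\<sigma> w)\<close> by auto
        then have "\<sigma> x \<in> \<sigma> ` blk P (\<sigma> w)" by blast
        then show ?thesis using fx bss[OF wA] xb by simp
      qed
      then show False using same bm[OF wA] bm[OF sA[OF wA]] d by metis
    qed
  qed
  have pt: "\<And>B. B \<in> P \<Longrightarrow> 2 * (if card B = 2 then 1 else 0) + card {x\<in>B. \<sigma> x = x}
              + (if B \<in> Q then 2 else 0) \<le> 2 * card B"
  proof -
    fix B assume BP: "B \<in> P"
    have c: "card B = 1 \<or> card B = 2" using c2 BP ne[OF BP] finP[OF BP]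
      by (metis One_nat_def card_0_eq le_SucE less_2_cases_iff nat_less_le numeral_2_eq_2)
    have f: "card {x\<in>B. \<sigma> x = x} \<le> card B" using finP[OF BP] by (intro card_mono) auto
    show "2 * (if card B = 2 then 1 else 0) + card {x\<in>B. \<sigma> x = x}
              + (if B \<in> Q then 2 else 0) \<le> 2 * card B"
    proof (cases "B \<in> Q")
      case True
      then have "{x\<in>B. \<sigma> x = x} = {}" using Qnf by blast
      then have "card {x\<in>B. \<sigma> x = x} = 0" by (simp only: card.empty)
      then show ?thesis using c True by auto
    next
      case False
      then show ?thesis using c f by auto
    qed
  qed
  have "(\<Sum>B\<in>P. 2 * (if card B = 2 then 1 else 0) + card {x\<in>B. \<sigma> x = x}
              + (if B \<in> Q then 2 else (0::nat))) \<le> (\<Sum>B\<in>P. 2 * card B)"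
    using pt by (rule sum_mono)
  moreover have "(\<Sum>B\<in>P. 2 * card B) = 2 * card A"
  proof -
    have "card (\<Union>P) = sum card P"
      using P finP unfolding partition_on_def disjoint_def by (intro card_Union_disjoint) (auto simp: pairwise_def disjnt_def)
    then show ?thesis using P unfolding partition_on_def by (simp add: sum_distrib_left)
  qed
  moreover have "(\<Sum>B\<in>P. (if card B = 2 then 1 else (0::nat))) = card {B\<in>P. card B = 2}"
    using fP by (simp add: sum.If_cases Int_def)
  moreover have "(\<Sum>B\<in>P. card {x\<in>B. \<sigma> x = x}) = card {x\<in>A. \<sigma> x = x}"
  proof -
    have "card (\<Union>B\<in>P. {x\<in>B. \<sigma> x = x}) = (\<Sum>B\<in>P. card {x\<in>B. \<sigma> x = x})"
      using fP finP P same by (intro card_UN_disjoint) auto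
    moreover have "(\<Union>B\<in>P. {x\<in>B. \<sigma> x = x}) = {x\<in>A. \<sigma> x = x}"
      using P unfolding partition_on_def by blast
    ultimately show ?thesis by simp
  qed
  moreover have "(\<Sum>B\<in>P. (if B \<in> Q then 2 else (0::nat))) = 2 * card Q"
    using fP QP by (simp add: sum.If_cases Int_absorb1)
  moreover have "(\<Sum>B\<in>P. 2 * (if card B = 2 then 1 else (0::nat))) = 2 * (\<Sum>B\<in>P. (if card B = 2 then 1 else (0::nat)))"
    by (rule sum_distrib_left[symmetric])
  ultimately show ?thesis unfolding W_def[symmetric] using cQ
    by (simp add: sum.distrib)
qed

lemma pow_le_exp_fact: "real m ^ m \<le> exp (real m) * fact m"
proof -
  have sm: "summable (\<lambda>n. real m ^ n / fact n)"
    using exp_converges[of "real m"] by (simp add: sums_iff divide_inverse mult.commute)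
  have "(\<Sum>n\<in>{m}. real m ^ n / fact n) \<le> (\<Sum>n. real m ^ n / fact n)"
    by (rule sum_le_suminf[OF sm]) auto
  also have "\<dots> = exp (real m)"
    using exp_converges[of "real m"] by (simp add: sums_iff divide_inverse mult.commute)
  finally have "real m ^ m / fact m \<le> exp (real m)" by simp
  then show ?thesis by (simp add: divide_le_eq mult.commute)
qed

lemma main_bound:
  assumes m1: "m \<ge> 1" and km: "k \<le> m" and PP: "P \<in> partitions_le2 m"
  shows "real (N1 k P m) \<le> (8 * exp 1) ^ m * (fact m) powr
        (1/2 - real (pi2 P) / (2 * real m) - real k / (4 * real m))"
proof -
  define A where "A = {1..m}"
  have P: "partition_on A P" and c2: "\<forall>B\<in>P. card B \<le> 2"
    using PP unfolding partitions_le2_def A_def by auto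
  have fin: "finite A" and cA: "card A = m" unfolding A_def by auto
  define p where "p = pi2 P"
  define S where "S = {\<sigma>. \<sigma> permutes {1..m} \<and> \<sigma> \<circ> \<sigma> = id \<and> preserves \<sigma> P
                     \<and> card {i\<in>{1..m}. \<sigma> i = i} = k}"
  have N: "N1 k P m = card S" unfolding N1_def S_def by simp
  define e where "e = (2 * real m - 2 * real p - real k) / (4 * real m)"
  have eeq: "1/2 - real (pi2 P) / (2 * real m) - real k / (4 * real m) = e"
    unfolding e_def p_def using m1 by (simp add: field_simps)
  have Sd: "\<And>\<sigma>. \<sigma> \<in> S \<Longrightarrow> \<sigma> permutes A \<and> (\<forall>x. \<sigma> (\<sigma> x) = x) \<and> preserves \<sigma> P
       \<and> card {x\<in>A. \<sigma> x = x} = k"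
    unfolding S_def A_def by (auto simp: fun_eq_iff)
  have nn: "0 \<le> (8 * exp 1) ^ m * (fact m) powr e" by simp
  show ?thesis
  proof (cases "S = {}")
    case True
    then show ?thesis using nn eeq N by simp
  next
    case False
    then obtain \<sigma>0 where "\<sigma>0 \<in> S" by blast
    from count_core[OF P fin c2, of \<sigma>0] Sd[OF this] cA
    have "2 * p + k \<le> 2 * m" unfolding p_def pi2_def by auto
    then have e0: "0 \<le> e" and e1: "e \<le> 1" using m1 unfolding e_def by (auto simp: field_simps)
    define me where "me = real m * e"
    have mee: "me = (2 * real m - 2 * real p - real k) / 4" unfolding me_def e_def using m1 by simp
    define E where "E = (\<lambda>\<sigma>. ({x\<in>A. \<sigma> x = x}, {x\<in>A. \<sigma> x \<noteq> x \<and> \<sigma> x \<in> blk P x},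
                        Ws P \<sigma> A, restrict \<sigma> (Ws P \<sigma> A)))"
    have injE: "inj_on E S"
    proof (rule inj_onI)
      fix \<sigma> \<tau> assume st: "\<sigma> \<in> S" "\<tau> \<in> S" "E \<sigma> = E \<tau>"
      have W: "Ws P \<sigma> A = Ws P \<tau> A" using st(3) unfolding E_def by simp
      have R: "\<forall>x \<in> Ws P \<sigma> A. \<sigma> x = \<tau> x"
      proof
        fix x assume x: "x \<in> Ws P \<sigma> A"
        have e: "restrict \<sigma> (Ws P \<sigma> A) = restrict \<tau> (Ws P \<sigma> A)" using st(3) W unfolding E_def by simp
        have "restrict \<sigma> (Ws P \<sigma> A) x = restrict \<tau> (Ws P \<sigma> A) x" by (rule fun_cong[OF e])
        then show "\<sigma> x = \<tau> x" using x unfolding restrict_def by (simp only: if_True)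
      qed
      show "\<sigma> = \<tau>"
      proof
        fix y
        have a: "{x\<in>A. \<sigma> x = x} = {x\<in>A. \<tau> x = x}" using st(3) unfolding E_def by simp
        have b: "{x\<in>A. \<sigma> x \<noteq> x \<and> \<sigma> x \<in> blk P x} = {x\<in>A. \<tau> x \<noteq> x \<and> \<tau> x \<in> blk P x}"
          using st(3) unfolding E_def by simp
        have s1: "\<sigma> permutes A" "\<forall>x. \<sigma> (\<sigma> x) = x" "preserves \<sigma> P" using Sd[OF st(1)] by auto
        have t1: "\<tau> permutes A" "\<forall>x. \<tau> (\<tau> x) = x" "preserves \<tau> P" using Sd[OF st(2)] by auto
        show "\<sigma> y = \<tau> y" by (rule inj_core[OF P fin c2 s1 t1 a b W R])
      qed
    qed
    define WS where "WS = {W. W \<subseteq> A \<and> 4 * card W + 2 * p + k \<le> 2 * m}"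
    define T where "T = Pow A \<times> Pow A \<times> Sigma WS (\<lambda>W. PiE W (\<lambda>_. A))"
    have ET: "E ` S \<subseteq> T"
    proof
      fix z assume "z \<in> E ` S"
      then obtain \<sigma> where s: "\<sigma> \<in> S" and z: "z = E \<sigma>" by blast
      have sd: "\<sigma> permutes A" "\<forall>x. \<sigma> (\<sigma> x) = x" "preserves \<sigma> P" "card {x\<in>A. \<sigma> x = x} = k"
        using Sd[OF s] by auto
      have WA: "Ws P \<sigma> A \<subseteq> A" unfolding Ws_def by blast
      have "Ws P \<sigma> A \<in> WS" unfolding WS_def using WA count_core[OF P fin c2 sd(1-3)] sd(4) cA
        unfolding p_def pi2_def by auto
      moreover have "restrict \<sigma> (Ws P \<sigma> A) \<in> PiE (Ws P \<sigma> A) (\<lambda>_. A)"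
        using WA sd(1) by (auto simp: permutes_in_image)
      ultimately show "z \<in> T" unfolding z E_def T_def by auto
    qed
    have finWS: "finite WS" unfolding WS_def using fin by simp
    have WSsub: "WS \<subseteq> Pow A" unfolding WS_def by auto
    have cardWS: "card WS \<le> 2 ^ m" using card_mono[OF _ WSsub] fin cA by (simp add: card_Pow)
    have fW: "\<And>W. W \<in> WS \<Longrightarrow> finite W" using WSsub fin by (meson PowD finite_subset subsetD)
    have finT: "finite T" unfolding T_def using fin finWS fW
      by (auto intro!: finite_cartesian_product finite_SigmaI finite_PiE)
    have "card S = card (E ` S)" using injE by (simp add: card_image)
    also have "\<dots> \<le> card T" using card_mono[OF finT ET] .
    also have "card T = 2 ^ m * 2 ^ m * (\<Sum>W\<in>WS. m ^ card W)"
    proof -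
      have "card (Sigma WS (\<lambda>W. PiE W (\<lambda>_. A))) = (\<Sum>W\<in>WS. card (PiE W (\<lambda>_. A)))"
        using finWS fin WSsub by (intro card_SigmaI) (auto intro!: finite_PiE dest: finite_subset)
      also have "\<dots> = (\<Sum>W\<in>WS. m ^ card W)"
        using fW cA by (intro sum.cong refl) (simp add: card_PiE)
      finally show ?thesis unfolding T_def using fin cA by (simp add: card_cartesian_product card_Pow)
    qed
    finally have cS: "real (card S) \<le> 2 ^ m * 2 ^ m * (\<Sum>W\<in>WS. real m ^ card W)"
    proof -
      assume h: "card S \<le> 2 ^ m * 2 ^ m * (\<Sum>W\<in>WS. m ^ card W)"
      have "real (card S) \<le> real (2 ^ m * 2 ^ m * (\<Sum>W\<in>WS. m ^ card W))" using h by (simp only: of_nat_le_iff)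
      also have "real (2 ^ m * 2 ^ m * (\<Sum>W\<in>WS. m ^ card W)) = 2 ^ m * 2 ^ m * (\<Sum>W\<in>WS. real m ^ card W)"
        by simp
      finally show ?thesis .
    qed
    have "(\<Sum>W\<in>WS. real m ^ card W) \<le> (\<Sum>W\<in>WS. real m powr me)"
    proof (rule sum_mono)
      fix W assume W: "W \<in> WS"
      have "real (card W) \<le> me" using W unfolding WS_def mee by auto
      then have "real m powr real (card W) \<le> real m powr me" using m1 by (intro powr_mono) auto
      then show "real m ^ card W \<le> real m powr me" using m1 by (simp add: powr_realpow)
    qed
    also have "\<dots> = real (card WS) * real m powr me" by simp
    also have "\<dots> \<le> 2 ^ m * real m powr me"
      using cardWS by (intro mult_right_mono) (auto simp del: of_nat_power simp: of_nat_power[symmetric])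
    finally have "(2::real) ^ m * 2 ^ m * (\<Sum>W\<in>WS. real m ^ card W) \<le> 2 ^ m * 2 ^ m * (2 ^ m * real m powr me)"
      by (intro mult_left_mono) auto
    also have "\<dots> = (2 * 2 * 2) ^ m * real m powr me" by (simp only: power_mult_distrib mult.assoc)
    finally have "real (card S) \<le> (2 * 2 * 2) ^ m * real m powr me" using cS by linarith
    then have cS2: "real (card S) \<le> 8 ^ m * real m powr me" by simp
    have "real m powr me = (real m powr real m) powr e" unfolding me_def by (simp add: powr_powr)
    also have "\<dots> = (real m ^ m) powr e" using m1 by (simp add: powr_realpow)
    also have "\<dots> \<le> (exp (real m) * fact m) powr e"
      using pow_le_exp_fact e0 by (intro powr_mono2) auto
    also have "\<dots> = exp (real m) powr e * fact m powr e" by (simp add: powr_mult)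
    also have "exp (real m) powr e = exp (real m * e)" by (simp add: powr_def)
    also have "exp (real m * e) \<le> exp (real m)" using e1 m1 by (simp add: mult_le_cancel_left1)
    finally have "real m powr me \<le> exp (real m) * fact m powr e" by (simp add: mult_right_mono)
    then have "real (card S) \<le> 8 ^ m * (exp (real m) * fact m powr e)"
      using cS2 order_trans[OF cS2 mult_left_mono[of _ _ "8 ^ m"]] by simp
    also have "\<dots> = (8 * exp 1) ^ m * fact m powr e"
      using exp_of_nat_mult[of m "1::real"] by (simp add: power_mult_distrib)
    finally show ?thesis using N eeq by simp
  qed
qed

theorem lemma5p2:
  "\<exists>C::real. C > 0 \<and>
    (\<forall>m k P. m \<ge> 1 \<longrightarrow> k \<le> m \<longrightarrow> P \<in> partitions_le2 m \<longrightarrow>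
      real (N1 k P m) \<le> C ^ m * (fact m) powr
        (1/2 - real (pi2 P) / (2 * real m) - real k / (4 * real m)))"
proof (intro exI[of _ "8 * exp 1"] conjI allI impI)
  show "0 < 8 * exp (1::real)" by simp
next
  fix m k P assume "1 \<le> m" "k \<le> m" "P \<in> partitions_le2 m"
  then show "real (N1 k P m) \<le> (8 * exp 1) ^ m * (fact m) powr
        (1/2 - real (pi2 P) / (2 * real m) - real k / (4 * real m))" by (rule main_bound)
qed

end
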